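(* Let $D\ge2$. There exist constants $c_0,c>0$ depending only on $D$ such that: let $0<\varepsilon<c_0$, $0<\tau\le1$, $\eta>0$, let $E\subset\mathbb R^D$ be finite with $\mathrm{diam}(E)\leq1$ and $|x-y|\geq\tau$ for distinct $x,y\in E$. Let $\rho:\mathbb R^D\to\mathbb R^D$ satisfy $|\rho(x)-x|\leq\eta$ for all $x\in E$, and suppose $\eta<c\varepsilon\tau$. Then there exists an $\varepsilon$-distorted diffeomorphism $\Phi$ of $\mathbb R^D$ such that (a) $\Phi(x)=x$ whenever $\mathrm{dist}(x,E)\geq10$, and (b) $\Phi(x)=x+[z-\rho(z)]$ for $x\in B(z,\tau/10)$, $z\in E$.
   Context: An $\varepsilon$-distorted diffeomorphism is a diffeomorphism $\Phi$ of $\mathbb R^D$ onto $\mathbb R^D$ with $(1+\varepsilon)^{-1}I\leq(\nabla\Phi(x))^T\nabla\Phi(x)\leq(1+\varepsilon)I$ for all $x$. $B(z,r)$ is the open ball. *)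

theory Defs
  imports "HOL-Analysis.Analysis"
begin

text \<open>An epsilon-distorted diffeomorphism of R^D (here R^D = real^'n):
  a bijection Phi of R^D onto R^D which is a C^1 diffeomorphism (Phi and its
  inverse are continuously differentiable), whose Jacobian matrix M x = nabla Phi(x)
  satisfies (1+eps)^(-1) I <= (M x)^T (M x) <= (1+eps) I in the Loewner order
  (the order of symmetric matrices given by quadratic forms).\<close>

definition eps_distorted_diffeo :: "real \<Rightarrow> (real^'n \<Rightarrow> real^'n) \<Rightarrow> bool" where
  "eps_distorted_diffeo eps Phi \<longleftrightarrow>
     bij Phi \<and>
     (\<exists>M :: real^'n \<Rightarrow> real^'n^'n.
        (\<forall>x. (Phi has_derivative (\<lambda>v. M x *v v)) (at x)) \<and>
        continuous_on UNIV M \<and>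
        (\<forall>x v. inverse (1 + eps) * (v \<bullet> v) \<le> v \<bullet> ((transpose (M x) ** M x) *v v) \<and>
               v \<bullet> ((transpose (M x) ** M x) *v v) \<le> (1 + eps) * (v \<bullet> v))) \<and>
     (\<exists>N :: real^'n \<Rightarrow> real^'n^'n.
        (\<forall>y. (inv Phi has_derivative (\<lambda>v. N y *v v)) (at y)) \<and>
        continuous_on UNIV N)"

end

theory Submission
  imports Defs
begin

definition sq0 :: "real \<Rightarrow> real" where "sq0 t = (max 0 t)^2"

lemma sq0_deriv: "(sq0 has_real_derivative (2 * max 0 t)) (at t)"
proof -
  have "((\<lambda>x. if x \<in> {..0::real} then 0 else x^2) has_derivative
      (if t \<in> {..0} then (\<lambda>h. 0) else (\<lambda>h. 2*t*h))) (at t within ({..0} \<union> {0..}))"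
    apply (rule has_derivative_If_within_closures)
    apply (auto intro!: derivative_eq_intros)
    done
  moreover have "(\<lambda>x. if x \<in> {..0::real} then 0 else x^2) = sq0"
    by (auto simp: sq0_def max_def fun_eq_iff)
  moreover have "(if t \<in> {..0} then (\<lambda>h. 0) else (\<lambda>h. 2*t*h)) = (\<lambda>h. (2 * max 0 t) * h)"
    by (auto simp: max_def fun_eq_iff)
  moreover have "{..0::real} \<union> {0..} = UNIV" by auto
  ultimately show ?thesis by (simp add: has_field_derivative_def)
qed

definition stp :: "real \<Rightarrow> real" where "stp t = 2 * sq0 t - 4 * sq0 (t - 1/2) + 2 * sq0 (t - 1)"
definition dstp :: "real \<Rightarrow> real" where "dstp t = 4 * max 0 t - 8 * max 0 (t - 1/2) + 4 * max 0 (t - 1)"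

lemma sq0_shift: "((\<lambda>z. sq0 (z - a)) has_real_derivative (2 * max 0 (t - a))) (at t)"
proof -
  have "((\<lambda>z. z - a) has_real_derivative 1) (at t)" by (auto intro!: derivative_eq_intros)
  from DERIV_chain2[OF sq0_deriv this] show ?thesis by simp
qed

lemma stp_deriv: "(stp has_real_derivative dstp t) (at t)"
proof -
  have a: "((\<lambda>z. sq0 (z - 0)) has_real_derivative (2 * max 0 (t - 0))) (at t)" by (rule sq0_shift)
  have "((\<lambda>t. 2 * sq0 (t - 0) - 4 * sq0 (t - 1/2) + 2 * sq0 (t - 1)) has_real_derivative
     (2 * (2 * max 0 (t - 0)) - 4 * (2 * max 0 (t - 1/2)) + 2 * (2 * max 0 (t-1)))) (at t)"
    by (intro DERIV_add DERIV_diff DERIV_cmult sq0_shift)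
  then show ?thesis unfolding stp_def[abs_def] dstp_def by (simp add: algebra_simps)
qed

lemma stp_0: "t \<le> 0 \<Longrightarrow> stp t = 0" by (simp add: stp_def sq0_def)
lemma stp_1: "t \<ge> 1 \<Longrightarrow> stp t = 1"
  by (simp add: stp_def sq0_def power2_eq_square algebra_simps)
lemma dstp_1: "t \<ge> 1 \<Longrightarrow> dstp t = 0" by (simp add: dstp_def)
lemma dstp_bd: "\<bar>dstp t\<bar> \<le> 2" by (simp add: dstp_def max_def)
lemma dstp_cont: "continuous_on UNIV dstp" unfolding dstp_def[abs_def] by (intro continuous_intros)


definition bth :: "real^'n \<Rightarrow> real" where "bth x = 1 - stp ((x \<bullet> x - 1/100) * (25/6))"
definition bgr :: "real^'n \<Rightarrow> real^'n" where
  "bgr x = (- (dstp ((x \<bullet> x - 1/100) * (25/6)) * (25/6) * 2)) *\<^sub>R x"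

lemma bth_deriv: "(bth has_derivative (\<lambda>h. bgr x \<bullet> h)) (at x)"
proof -
  have g: "((\<lambda>x. (x \<bullet> x - 1/100) * (25/6)) has_derivative (\<lambda>h. (x \<bullet> h + h \<bullet> x) * (25/6))) (at x)"
    by (auto intro!: derivative_eq_intros)
  have "((\<lambda>x. stp ((x \<bullet> x - 1/100) * (25/6))) has_derivative
     (\<lambda>h. (x \<bullet> h + h \<bullet> x) * (25/6) * dstp ((x \<bullet> x - 1/100) * (25/6)))) (at x)"
    by (rule DERIV_compose_FDERIV[OF stp_deriv g])
  then have "((\<lambda>x. 1 - stp ((x \<bullet> x - 1/100) * (25/6))) has_derivative
     (\<lambda>h. 0 - (x \<bullet> h + h \<bullet> x) * (25/6) * dstp ((x \<bullet> x - 1/100) * (25/6)))) (at x)"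
    by (intro derivative_intros)
  moreover have "(\<lambda>h. 0 - (x \<bullet> h + h \<bullet> x) * (25/6) * dstp ((x \<bullet> x - 1/100) * (25/6))) = (\<lambda>h. bgr x \<bullet> h)"
    by (auto simp: fun_eq_iff bgr_def inner_commute algebra_simps)
  ultimately show ?thesis unfolding bth_def[abs_def] by simp
qed

lemma bth_small: "norm x < 1/10 \<Longrightarrow> bth x = 1"
proof -
  assume "norm x < 1/10"
  then have "(norm x)^2 < (1/10)^2" by (intro power_strict_mono) auto
  then have "x \<bullet> x < 1/100" by (simp add: dot_square_norm power2_eq_square)
  then show ?thesis by (simp add: bth_def stp_0)
qed

lemma bth_big: "norm x \<ge> 1/2 \<Longrightarrow> bth x = 0 \<and> bgr x = 0"
proof -
  assume "norm x \<ge> 1/2"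
  then have "(norm x)^2 \<ge> (1/2)^2" by (intro power_mono) auto
  then have "x \<bullet> x \<ge> 1/4" by (simp add: dot_square_norm power2_eq_square)
  then have "(x \<bullet> x - 1/100) * (25/6) \<ge> 1" by simp
  then show ?thesis by (simp add: bth_def bgr_def stp_1 dstp_1)
qed

lemma bgr_bd: "norm (bgr x) \<le> 10"
proof (cases "norm x \<ge> 1/2")
  case True then show ?thesis using bth_big[of x] by simp
next
  case False
  have "norm (bgr x) = \<bar>dstp ((x \<bullet> x - 1/100) * (25/6))\<bar> * (25/6) * 2 * norm x"
    by (simp add: bgr_def abs_mult)
  also have "\<dots> \<le> 2 * (25/6) * 2 * (1/2)"
    using False dstp_bd[of "(x \<bullet> x - 1/100) * (25/6)"]
    by (intro mult_mono) auto
  finally show ?thesis by simp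
qed

lemma bgr_cont: "continuous_on UNIV bgr"
  unfolding bgr_def[abs_def]
  by (intro continuous_intros continuous_on_compose2[OF dstp_cont]) auto


lemma mat_norm_bd:
  fixes A :: "real^'n^'n"
  shows "norm (A *v y) \<le> (real CARD('n) * real CARD('n) * norm A) * norm y"
proof -
  have "norm (A *v y) \<le> onorm ((*v) A) * norm y"
    by (rule onorm[OF matrix_vector_mul_bounded_linear])
  also have "onorm ((*v) A) \<le> real CARD('n) * real CARD('n) * norm A"
  proof (rule onorm_le_matrix_component)
    fix i j
    have "\<bar>A $ i $ j\<bar> \<le> norm (A $ i)" using component_le_norm_cart[of "A $ i" j] by simp
    also have "\<dots> \<le> norm A" by (rule Finite_Cartesian_Product.norm_nth_le)
    finally show "\<bar>A $ i $ j\<bar> \<le> norm A" .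
  qed
  finally show ?thesis by (simp add: mult_right_mono)
qed

lemma minv_cont:
  fixes M Minv :: "real^'n \<Rightarrow> real^'n^'n"
  assumes cM: "continuous_on UNIV M" and k: "k > 0"
    and lb: "\<And>x w. k * norm w \<le> norm (M x *v w)"
    and inv: "\<And>x. M x ** Minv x = mat 1"
  shows "continuous_on UNIV Minv"
proof -
  have col: "isCont (\<lambda>x. Minv x *v w) x0" for w x0
  proof -
    let ?u = "\<lambda>x. Minv x *v w"
    have Mu: "M x *v ?u x = w" for x by (simp add: matrix_vector_mul_assoc inv)
    define C where "C = real CARD('n) * real CARD('n) * norm (?u x0) / k"
    have bd: "norm (?u x - ?u x0) \<le> C * norm (M x - M x0)" for x
    proof -
      have "k * norm (?u x - ?u x0) \<le> norm (M x *v (?u x - ?u x0))" by (rule lb)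
      also have "M x *v (?u x - ?u x0) = (M x0 - M x) *v ?u x0"
        by (simp add: matrix_vector_mult_diff_distrib matrix_vector_mult_diff_rdistrib Mu)
      also have "norm ((M x0 - M x) *v ?u x0) \<le> (real CARD('n) * real CARD('n) * norm (M x0 - M x)) * norm (?u x0)"
        by (rule mat_norm_bd)
      finally have "k * norm (?u x - ?u x0) \<le> (real CARD('n) * real CARD('n) * norm (M x - M x0)) * norm (?u x0)"
        by (simp add: norm_minus_commute)
      then show ?thesis using k by (simp add: C_def field_simps)
    qed
    have "isCont M x0" using cM by (simp add: continuous_on_eq_continuous_at)
    then have "((\<lambda>x. M x - M x0) \<longlongrightarrow> 0) (at x0)"
      by (simp add: isCont_def LIM_zero)
    then have "((\<lambda>x. C * norm (M x - M x0)) \<longlongrightarrow> 0) (at x0)"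
      by (intro tendsto_mult_right_zero tendsto_norm_zero)
    then have "((\<lambda>x. ?u x - ?u x0) \<longlongrightarrow> 0) (at x0)"
      by (rule Lim_null_comparison[rotated]) (simp add: bd)
    then show ?thesis by (simp add: isCont_def LIM_zero_iff)
  qed
  have eq: "Minv = (\<lambda>x. \<chi> i j. (Minv x *v axis j 1) $ i)"
    by (auto simp: fun_eq_iff vec_eq_iff matrix_vector_mult_def axis_def if_distrib cong: if_cong)
  have "continuous_on UNIV (\<lambda>x. Minv x *v w)" for w
    using col by (simp add: continuous_at_imp_continuous_on)
  then show ?thesis by (subst eq) (intro continuous_intros)
qed


lemma diffeo_perturb:
  fixes g :: "real^'n \<Rightarrow> real^'n" and Dg :: "real^'n \<Rightarrow> real^'n \<Rightarrow> real^'n"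
  assumes e: "0 < eps" "eps < 1"
    and dg: "\<And>x. (g has_derivative Dg x) (at x)"
    and bd: "\<And>x h. norm (Dg x h) \<le> eps/4 * norm h"
    and cd: "\<And>j. continuous_on UNIV (\<lambda>x. Dg x (axis j 1))"
  shows "eps_distorted_diffeo eps (\<lambda>x. x + g x)"
proof -
  define d where "d = eps/4"
  have d: "0 < d" "d < 1/4" using e by (auto simp: d_def)
  define Phi where "Phi = (\<lambda>x::real^'n. x + g x)"
  have bl: "bounded_linear (Dg x)" for x using dg has_derivative_bounded_linear by blast
  have lip: "norm (g x - g y) \<le> d * norm (x - y)" for x y
  proof -
    have on: "onorm (Dg z) \<le> d" for z by (rule onorm_le) (use bd in \<open>simp add: d_def\<close>)
    show ?thesis
      by (rule differentiable_bound[of UNIV g Dg d x y]) (use dg on in auto)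
  qed
  have lowb: "(1 - d) * norm (x - y) \<le> norm (Phi x - Phi y)" for x y
  proof -
    have "x - y = (Phi x - Phi y) - (g x - g y)" by (simp add: Phi_def)
    then have "norm (x - y) \<le> norm (Phi x - Phi y) + norm (g x - g y)"
      by (metis norm_triangle_ineq4)
    with lip[of x y] show ?thesis by (simp add: algebra_simps)
  qed
  have inj: "inj Phi"
  proof (rule injI)
    fix x y assume "Phi x = Phi y"
    with lowb[of x y] d have "norm (x - y) \<le> 0"
      by (simp add: mult_le_0_iff)
    then show "x = y" by simp
  qed
  have surj: "surj Phi"
  proof -
    have "y \<in> range Phi" for y
    proof -
      have "\<exists>!x. (\<lambda>x. y - g x) x = x"
        by (rule banach_fix_type[of d]) (use d lip in \<open>auto simp: dist_norm norm_minus_commute\<close>)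
      then obtain x where "y - g x = x" by auto
      then have "y = Phi x" by (auto simp: Phi_def algebra_simps)
      then show ?thesis by auto
    qed
    then show ?thesis by auto
  qed
  have bij: "bij Phi" using inj surj by (simp add: bij_def)
  have iv1: "inv Phi (Phi x) = x" for x by (simp add: inj)
  have iv2: "Phi (inv Phi y) = y" for y by (meson surj surj_f_inv_f)
  define M where "M x = matrix (\<lambda>h. h + Dg x h)" for x
  have lin: "linear (\<lambda>h. h + Dg x h)" for x
    using bounded_linear_add[OF bounded_linear_ident bl[of x]] bounded_linear.linear by blast
  have Mv: "M x *v h = h + Dg x h" for x h unfolding M_def using matrix_vector_mul(2)[OF lin] by (metis (no_types, lifting))
  have dPhi: "(Phi has_derivative (\<lambda>h. M x *v h)) (at x)" for x
  proof -
    have "(Phi has_derivative (\<lambda>h. h + Dg x h)) (at x)" unfolding Phi_def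
      by (intro derivative_intros dg)
    then show ?thesis by (simp add: Mv)
  qed
  have cM: "continuous_on UNIV M"
  proof -
    have "M = (\<lambda>x. \<chi> i j. (axis j 1 + Dg x (axis j 1)) $ i)"
      by (auto simp: M_def matrix_def fun_eq_iff)
    then show ?thesis by simp (intro continuous_intros cd)
  qed
  have Mlow: "(1 - d) * norm w \<le> norm (M x *v w)" for x w
  proof -
    have "w = (w + Dg x w) - Dg x w" by simp
    then have "norm w \<le> norm (w + Dg x w) + norm (Dg x w)" by (metis norm_triangle_ineq4)
    with bd[of x w] show ?thesis by (simp add: Mv d_def algebra_simps)
  qed
  have Mup: "norm (M x *v w) \<le> (1 + d) * norm w" for x w
  proof -
    have "norm (w + Dg x w) \<le> norm w + norm (Dg x w)" by (rule norm_triangle_ineq)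
    with bd[of x w] show ?thesis by (simp add: Mv d_def algebra_simps)
  qed
  have quad: "w \<bullet> ((transpose (M x) ** M x) *v w) = (norm (M x *v w))^2" for x w
  proof -
    have "w \<bullet> ((M x *v w) v* M x) = (M x *v w) \<bullet> (M x *v w)"
      by (metis inner_commute dot_lmul_matrix)
    then show ?thesis by (simp add: matrix_vector_mul_assoc[symmetric] power2_norm_eq_inner)
  qed
  have c1: "inverse (1 + eps) \<le> (1 - d)^2"
  proof -
    have "0 \<le> d * (2 - 7 * d + 4 * d^2)" using d by (intro mult_nonneg_nonneg) auto
    moreover have "(1 - d)^2 * (1 + 4 * d) = 1 + d * (2 - 7 * d + 4 * d^2)"
      by (simp add: power2_eq_square algebra_simps)
    moreover have "eps = 4 * d" by (simp add: d_def)
    ultimately have "1 \<le> (1 - d)^2 * (1 + eps)" by simp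
    then show ?thesis using e by (simp add: field_simps)
  qed
  have c2: "(1 + d)^2 \<le> 1 + eps"
  proof -
    have "d * d \<le> d * 1" using d by (intro mult_left_mono) auto
    moreover have "(1 + d)^2 = 1 + 2 * d + d * d" by (simp add: power2_eq_square algebra_simps)
    moreover have "eps = 4 * d" by (simp add: d_def)
    ultimately show ?thesis using d by linarith
  qed
  have distort: "inverse (1 + eps) * (w \<bullet> w) \<le> w \<bullet> ((transpose (M x) ** M x) *v w) \<and>
       w \<bullet> ((transpose (M x) ** M x) *v w) \<le> (1 + eps) * (w \<bullet> w)" for x w
  proof -
    have a: "((1 - d) * norm w)^2 \<le> (norm (M x *v w))^2"
      using Mlow[of w x] d by (intro power_mono) auto
    have b: "(norm (M x *v w))^2 \<le> ((1 + d) * norm w)^2"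
      using Mup[of x w] by (intro power_mono) auto
    have "inverse (1 + eps) * (norm w)^2 \<le> (1 - d)^2 * (norm w)^2"
      using c1 by (intro mult_right_mono) auto
    moreover have "(1 + d)^2 * (norm w)^2 \<le> (1 + eps) * (norm w)^2"
      using c2 by (intro mult_right_mono) auto
    ultimately show ?thesis using a b
      by (simp add: quad dot_square_norm power_mult_distrib)
  qed
  have invM: "\<exists>B. M x ** B = mat 1" for x
  proof -
    have "inj ((*v) (M x))"
    proof (rule injI)
      fix a b assume "M x *v a = M x *v b"
      then have "M x *v (a - b) = 0" by (simp add: matrix_vector_mult_diff_distrib)
      with Mlow[of "a - b" x] d have "norm (a - b) \<le> 0" by (simp add: mult_le_0_iff)
      then show "a = b" by simp
    qed
    then obtain B where "B ** M x = mat 1" using matrix_left_invertible_injective by blast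
    then show ?thesis using matrix_left_right_inverse by blast
  qed
  define Minv where "Minv x = (SOME B. M x ** B = mat 1)" for x
  have MMinv: "M x ** Minv x = mat 1" for x unfolding Minv_def by (rule someI_ex[OF invM])
  have cMinv: "continuous_on UNIV Minv"
    by (rule minv_cont[OF cM _ Mlow MMinv]) (use d in simp)
  have cinv: "continuous_on UNIV (inv Phi)"
  proof (rule lipschitz_on_continuous_on)
    show "(1 / (1 - d))-lipschitz_on UNIV (inv Phi)"
    proof (rule lipschitz_onI)
      fix a b :: "real^'n"
      have "(1 - d) * norm (inv Phi a - inv Phi b) \<le> norm (a - b)"
        using lowb[of "inv Phi a" "inv Phi b"] by (simp add: iv2)
      then show "dist (inv Phi a) (inv Phi b) \<le> 1 / (1 - d) * dist a b"
        using d by (simp add: dist_norm field_simps)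
    qed (use d in simp)
  qed
  have cPhi: "continuous_on UNIV Phi"
    by (rule has_derivative_continuous_on) (use dPhi in \<open>auto intro: has_derivative_at_withinI\<close>)
  have dinv: "(inv Phi has_derivative (\<lambda>h. Minv (inv Phi y) *v h)) (at y)" for y
  proof -
    have "(inv Phi has_derivative (\<lambda>h. Minv (inv Phi y) *v h)) (at (Phi (inv Phi y)))"
    proof (rule has_derivative_inverse_strong[of UNIV "inv Phi y" Phi "inv Phi" "\<lambda>h. M (inv Phi y) *v h"])
      show "(\<lambda>h. M (inv Phi y) *v h) \<circ> (\<lambda>h. Minv (inv Phi y) *v h) = id"
        by (simp add: fun_eq_iff matrix_vector_mul_assoc MMinv)
    qed (use cPhi iv1 dPhi in auto)
    then show ?thesis by (simp add: iv2)
  qed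
  have cN: "continuous_on UNIV (\<lambda>y. Minv (inv Phi y))"
    by (rule continuous_on_compose2[OF cMinv cinv]) auto
  show ?thesis
    unfolding eps_distorted_diffeo_def Phi_def[symmetric]
    apply (intro conjI bij)
     apply (rule exI[of _ M]) using dPhi cM distort apply blast
    apply (rule exI[of _ "\<lambda>y. Minv (inv Phi y)"]) using dinv cN by blast
qed


lemma sum_single:
  assumes "finite A" "a \<in> A" "\<And>z. z \<in> A \<Longrightarrow> z \<noteq> a \<Longrightarrow> f z = 0"
  shows "sum f A = f a"
proof -
  have "sum f A = f a + sum f (A - {a})" using assms by (simp add: sum.remove)
  also have "sum f (A - {a}) = 0" using assms by (intro sum.neutral) auto
  finally show ?thesis by simp
qed

lemma construct:
  fixes E :: "(real^'n) set" and v :: "real^'n \<Rightarrow> real^'n"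
  assumes e: "0 < eps" "eps < 1" and t: "0 < tau" and fin: "finite E"
    and sep: "\<And>x y. x \<in> E \<Longrightarrow> y \<in> E \<Longrightarrow> x \<noteq> y \<Longrightarrow> dist x y \<ge> tau"
    and vb: "\<And>z. z \<in> E \<Longrightarrow> norm (v z) \<le> eps * tau / 40"
  shows "\<exists>Phi. eps_distorted_diffeo eps Phi \<and> (\<forall>x. (\<forall>y\<in>E. dist x y \<ge> tau/2) \<longrightarrow> Phi x = x) \<and>
     (\<forall>z\<in>E. \<forall>x\<in>ball z (tau/10). Phi x = x + v z)"
proof -
  define sc where "sc z x = (1/tau) *\<^sub>R (x - z)" for z x :: "real^'n"
  have nsc: "norm (sc z x) = dist x z / tau" for z x
    using t by (simp add: sc_def dist_norm)
  define g where "g x = (\<Sum>z\<in>E. bth (sc z x) *\<^sub>R v z)" for x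
  define Dg where "Dg x h = (\<Sum>z\<in>E. ((bgr (sc z x) \<bullet> h) / tau) *\<^sub>R v z)" for x h
  have vanish: "bth (sc z x) = 0 \<and> bgr (sc z x) = 0" if "dist x z \<ge> tau/2" for z x
    using bth_big[of "sc z x"] that t by (simp add: nsc field_simps)
  have uniq: "z1 = z2" if "z1 \<in> E" "z2 \<in> E" "dist x z1 < tau/2" "dist x z2 < tau/2" for x z1 z2
  proof (rule ccontr)
    assume "z1 \<noteq> z2"
    then have "tau \<le> dist z1 z2" using sep that by auto
    also have "\<dots> \<le> dist x z1 + dist x z2" by (rule dist_triangle3)
    finally show False using that by simp
  qed
  have cases: "(\<forall>z\<in>E. dist x z \<ge> tau/2) \<or> (\<exists>z0\<in>E. dist x z0 < tau/2 \<and> (\<forall>z\<in>E. z \<noteq> z0 \<longrightarrow> dist x z \<ge> tau/2))" for x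
    using uniq by (meson not_le)
  have dg: "(g has_derivative Dg x) (at x)" for x
  proof -
    have "((\<lambda>x. bth (sc z x) *\<^sub>R v z) has_derivative (\<lambda>h. ((bgr (sc z x) \<bullet> h) / tau) *\<^sub>R v z)) (at x)" for z
    proof -
      have aff: "(sc z has_derivative (\<lambda>h. (1/tau) *\<^sub>R h)) (at x)"
        unfolding sc_def[abs_def] by (auto intro!: derivative_eq_intros)
      have "((\<lambda>x. bth (sc z x)) has_derivative (\<lambda>h. bgr (sc z x) \<bullet> ((1/tau) *\<^sub>R h))) (at x)"
        by (rule has_derivative_compose[OF aff bth_deriv])
      from has_derivative_scaleR_left[OF this, of "v z"] show ?thesis by simp
    qed
    then have "((\<lambda>x. \<Sum>z\<in>E. bth (sc z x) *\<^sub>R v z) has_derivative (\<lambda>h. \<Sum>z\<in>E. ((bgr (sc z x) \<bullet> h) / tau) *\<^sub>R v z)) (at x)"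
      by (intro has_derivative_sum) auto
    then show ?thesis unfolding g_def[abs_def] Dg_def[abs_def] by simp
  qed
  have bd: "norm (Dg x h) \<le> eps/4 * norm h" for x h
  proof -
    from cases[of x] show ?thesis
    proof
      assume "\<forall>z\<in>E. dist x z \<ge> tau/2"
      then have "Dg x h = 0" unfolding Dg_def using vanish by (intro sum.neutral) auto
      then show ?thesis using e by simp
    next
      assume "\<exists>z0\<in>E. dist x z0 < tau/2 \<and> (\<forall>z\<in>E. z \<noteq> z0 \<longrightarrow> dist x z \<ge> tau/2)"
      then obtain z0 where z0: "z0 \<in> E" "\<forall>z\<in>E. z \<noteq> z0 \<longrightarrow> dist x z \<ge> tau/2" by auto
      have "Dg x h = ((bgr (sc z0 x) \<bullet> h) / tau) *\<^sub>R v z0"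
        unfolding Dg_def using z0 vanish fin by (intro sum_single) auto
      then have "norm (Dg x h) = (\<bar>bgr (sc z0 x) \<bullet> h\<bar> / tau) * norm (v z0)"
        using t by simp
      also have "\<dots> \<le> (10 * norm h / tau) * (eps * tau / 40)"
      proof (intro mult_mono divide_right_mono)
        have "\<bar>bgr (sc z0 x) \<bullet> h\<bar> \<le> norm (bgr (sc z0 x)) * norm h" by (rule Cauchy_Schwarz_ineq2)
        also have "\<dots> \<le> 10 * norm h" using bgr_bd by (intro mult_right_mono) auto
        finally show "\<bar>bgr (sc z0 x) \<bullet> h\<bar> \<le> 10 * norm h" .
      qed (use t vb z0 in auto)
      also have "\<dots> = eps/4 * norm h" using t by (simp add: field_simps)
      finally show ?thesis .
    qed
  qed
  have cd: "continuous_on UNIV (\<lambda>x. Dg x (axis j 1))" for j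
    unfolding Dg_def sc_def
    by (intro continuous_intros continuous_on_compose2[OF bgr_cont]) (use t in auto)
  have D: "eps_distorted_diffeo eps (\<lambda>x. x + g x)"
    by (rule diffeo_perturb[OF e dg bd cd])
  have pa: "x + g x = x" if "\<forall>y\<in>E. dist x y \<ge> tau/2" for x
  proof -
    have "g x = 0" unfolding g_def using vanish that by (intro sum.neutral) auto
    then show ?thesis by simp
  qed
  have pb: "x + g x = x + v z" if z: "z \<in> E" and x: "x \<in> ball z (tau/10)" for z x
  proof -
    have dz: "dist x z < tau/10" using x by (simp add: dist_commute)
    have far: "dist x z' \<ge> tau/2" if "z' \<in> E" "z' \<noteq> z" for z'
    proof -
      have "tau \<le> dist z z'" using sep that z by auto
      also have "\<dots> \<le> dist z x + dist x z'" by (rule dist_triangle)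
      finally show ?thesis using dz t by (simp add: dist_commute)
    qed
    have "g x = bth (sc z x) *\<^sub>R v z"
      unfolding g_def using z far vanish fin by (intro sum_single) auto
    moreover have "bth (sc z x) = 1"
      using dz t by (intro bth_small) (simp add: nsc field_simps)
    ultimately show ?thesis by simp
  qed
  show ?thesis using D pa pb by blast
qed

theorem lemma3p3:
  assumes "CARD('n::finite) \<ge> 2"
  shows "\<exists>c0 > 0. \<exists>c > 0. \<forall>(eps::real) (tau::real) (eta::real) (E :: (real^'n) set) (rho :: real^'n \<Rightarrow> real^'n).
     0 < eps \<and> eps < c0 \<and> 0 < tau \<and> tau \<le> 1 \<and> 0 < eta \<and>
     finite E \<and> diameter E \<le> 1 \<and>
     (\<forall>x\<in>E. \<forall>y\<in>E. x \<noteq> y \<longrightarrow> dist x y \<ge> tau) \<and>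
     (\<forall>x\<in>E. norm (rho x - x) \<le> eta) \<and>
     eta < c * eps * tau
     \<longrightarrow> (\<exists>Phi. eps_distorted_diffeo eps Phi \<and>
            (\<forall>x. (\<forall>y\<in>E. dist x y \<ge> 10) \<longrightarrow> Phi x = x) \<and>
            (\<forall>z\<in>E. \<forall>x\<in>ball z (tau / 10). Phi x = x + (z - rho z)))"
proof -
  have main: "\<forall>(eps::real) (tau::real) (eta::real) (E :: (real^'n) set) (rho :: real^'n \<Rightarrow> real^'n).
     0 < eps \<and> eps < 1 \<and> 0 < tau \<and> tau \<le> 1 \<and> 0 < eta \<and>
     finite E \<and> diameter E \<le> 1 \<and>
     (\<forall>x\<in>E. \<forall>y\<in>E. x \<noteq> y \<longrightarrow> dist x y \<ge> tau) \<and>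
     (\<forall>x\<in>E. norm (rho x - x) \<le> eta) \<and>
     eta < 1/40 * eps * tau
     \<longrightarrow> (\<exists>Phi. eps_distorted_diffeo eps Phi \<and>
            (\<forall>x. (\<forall>y\<in>E. dist x y \<ge> 10) \<longrightarrow> Phi x = x) \<and>
            (\<forall>z\<in>E. \<forall>x\<in>ball z (tau / 10). Phi x = x + (z - rho z)))"
  proof (intro allI impI)
  fix eps tau eta :: real and E :: "(real^'n) set" and rho :: "real^'n \<Rightarrow> real^'n"
  assume A: "0 < eps \<and> eps < 1 \<and> 0 < tau \<and> tau \<le> 1 \<and> 0 < eta \<and>
     finite E \<and> diameter E \<le> 1 \<and>
     (\<forall>x\<in>E. \<forall>y\<in>E. x \<noteq> y \<longrightarrow> dist x y \<ge> tau) \<and>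
     (\<forall>x\<in>E. norm (rho x - x) \<le> eta) \<and>
     eta < 1/40 * eps * tau"
  have vb: "norm (z - rho z) \<le> eps * tau / 40" if "z \<in> E" for z
    using A that by (auto simp: norm_minus_commute)
  obtain Phi where P: "eps_distorted_diffeo eps Phi"
    "\<forall>x. (\<forall>y\<in>E. dist x y \<ge> tau/2) \<longrightarrow> Phi x = x"
    "\<forall>z\<in>E. \<forall>x\<in>ball z (tau/10). Phi x = x + (z - rho z)"
    using construct[of eps tau E "\<lambda>z. z - rho z"] A vb by blast
  have "\<forall>x. (\<forall>y\<in>E. dist x y \<ge> 10) \<longrightarrow> Phi x = x"
  proof (intro allI impI)
    fix x assume "\<forall>y\<in>E. dist x y \<ge> 10"
    then have "\<forall>y\<in>E. dist x y \<ge> tau/2" using A by force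
    then show "Phi x = x" using P by blast
  qed
  then show "\<exists>Phi. eps_distorted_diffeo eps Phi \<and>
            (\<forall>x. (\<forall>y\<in>E. dist x y \<ge> 10) \<longrightarrow> Phi x = x) \<and>
            (\<forall>z\<in>E. \<forall>x\<in>ball z (tau / 10). Phi x = x + (z - rho z))"
    using P by blast
  qed
  show ?thesis
    apply (rule exI[of _ 1], rule conjI, simp)
    apply (rule exI[of _ "1/40"], rule conjI, simp)
    by (rule main)
qed

end
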